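(* Let $H$ be the orthocenter of $T=P_1P_2P_3$. For each $i$, with $\{i,j,k\}=\{1,2,3\}$: the perpendicular from $P_i$ to the line $P_j'P_k'$ passes through $-M$ (the reflection of $M$ in $O$), and the perpendicular from $P_i'$ to the line $P_jP_k$ passes through $2H-M$ (the reflection of $M$ in $H$). Hence $T$ and $T'=P_1'P_2'P_3'$ are orthologic with orthology centers $-M$ and $2H-M$.
   Context: Let $a>b>0$ and $c>0$ with $c^2=a^2-b^2$. Let $\mathcal{E}$ be the ellipse $x^2/a^2+y^2/b^2=1$ with center $O=(0,0)$, parametrized by $P(t)=(a\cos t,b\sin t)$. Fix $u\in\mathbb{R}$, let $M=(a\cos u,b\sin u)$ and $\Delta_u(t)=(x_u(t),y_u(t))$, where $x_u(t)=\frac1a\big(c^2(1+\cos(t+u))\cos t-a^2\cos u\big)$ and $y_u(t)=\frac1b\big(c^2\cos t\sin(t+u)-c^2\sin t-a^2\sin u\big)$ (the negative pedal curve of $\mathcal{E}$ with respect to $M$). For $i=1,2,3$ let $t_i=-u/3-2\pi(i-1)/3$, $P_i=P(t_i)$, $P_i'=\Delta_u(t_i)$ (the cusps). Two triangles $ABC$, $DEF$ are orthologic if the perpendiculars from $A,B,C$ to $EF,FD,DE$ respectively are concurrent; the concurrence points of these perpendiculars and of the perpendiculars from $D,E,F$ to $BC,CA,AB$ are the orthology centers. *)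

theory Defs
  imports Complex_Main
begin

type_synonym pt = "real \<times> real"

definition dotp :: "pt \<Rightarrow> pt \<Rightarrow> real" where
  "dotp p q = fst p * fst q + snd p * snd q"

definition psub :: "pt \<Rightarrow> pt \<Rightarrow> pt" where
  "psub p q = (fst p - fst q, snd p - snd q)"

definition on_perp :: "pt \<Rightarrow> pt \<Rightarrow> pt \<Rightarrow> pt \<Rightarrow> bool" where
  "on_perp Q A B C \<longleftrightarrow> dotp (psub Q A) (psub C B) = 0"

definition is_orthocenter :: "pt \<Rightarrow> pt \<Rightarrow> pt \<Rightarrow> pt \<Rightarrow> bool" where
  "is_orthocenter H A B C \<longleftrightarrow> on_perp H A B C \<and> on_perp H B C A \<and> on_perp H C A B"

definition orthology_center :: "pt \<Rightarrow> pt \<Rightarrow> pt \<Rightarrow> pt \<Rightarrow> pt \<Rightarrow> pt \<Rightarrow> pt \<Rightarrow> bool" where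
  "orthology_center Q A B C D E F \<longleftrightarrow> on_perp Q A E F \<and> on_perp Q B F D \<and> on_perp Q C D E"

definition orthologic :: "pt \<Rightarrow> pt \<Rightarrow> pt \<Rightarrow> pt \<Rightarrow> pt \<Rightarrow> pt \<Rightarrow> bool" where
  "orthologic A B C D E F \<longleftrightarrow> (\<exists>Q. orthology_center Q A B C D E F)"

definition ellP :: "real \<Rightarrow> real \<Rightarrow> real \<Rightarrow> pt" where
  "ellP a b t = (a * cos t, b * sin t)"

definition negpedal :: "real \<Rightarrow> real \<Rightarrow> real \<Rightarrow> real \<Rightarrow> real \<Rightarrow> pt" where
  "negpedal a b c u t =
     ((c^2 * (1 + cos (t + u)) * cos t - a^2 * cos u) / a,
      (c^2 * cos t * sin (t + u) - c^2 * sin t - a^2 * sin u) / b)"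

definition cusp_param :: "real \<Rightarrow> nat \<Rightarrow> real" where
  "cusp_param u i = - u / 3 - 2 * pi * (real i - 1) / 3"

end

theory Submission imports Defs begin
definition NP :: "real \<Rightarrow> real \<Rightarrow> real \<Rightarrow> real \<Rightarrow> real \<Rightarrow> real \<Rightarrow> real \<Rightarrow> pt" where
 "NP a b c ct st cu su = ((c^2 * (1 + (ct*cu - st*su)) * ct - a^2 * cu) / a,
      (c^2 * ct * (st*cu + ct*su) - c^2 * st - a^2 * su) / b)"

lemma negpedal_NP: "negpedal a b c u t = NP a b c (cos t) (sin t) (cos u) (sin u)"
  unfolding negpedal_def NP_def by (simp add: cos_add sin_add)

lemma alg:
  fixes a b c C S r :: real and M P1 P2 P3 D1 D2 D3 :: pt
  assumes h: "C^2+S^2=1" "r^2=3" "c^2=a^2-b^2" "a\<noteq>0" "b\<noteq>0"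
  and M: "M = (a*(4*C^3-3*C), b*(-(3*S-4*S^3)))"
  and P: "P1 = (a*C, b*S)" "P2 = (a*(-C/2 + r*S/2), b*(-S/2 - r*C/2))"
         "P3 = (a*(-C/2 - r*S/2), b*(-S/2 + r*C/2))"
  and D: "D1 = NP a b c C S (4*C^3-3*C) (-(3*S-4*S^3))"
         "D2 = NP a b c (-C/2 + r*S/2) (-S/2 - r*C/2) (4*C^3-3*C) (-(3*S-4*S^3))"
         "D3 = NP a b c (-C/2 - r*S/2) (-S/2 + r*C/2) (4*C^3-3*C) (-(3*S-4*S^3))"
  shows "on_perp (-fst M, -snd M) P1 D2 D3" "on_perp (-fst M, -snd M) P2 D3 D1"
        "on_perp (-fst M, -snd M) P3 D1 D2"
        "on_perp (2*fst P1 - fst M, 2*snd P1 - snd M) D1 P2 P3"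
        "on_perp (2*fst P2 - fst M, 2*snd P2 - snd M) D2 P3 P1"
        "on_perp (2*fst P3 - fst M, 2*snd P3 - snd M) D3 P1 P2"
  using h unfolding M P D on_perp_def dotp_def psub_def NP_def
  apply (simp_all add: field_simps)
  subgoal by algebra
  subgoal by algebra
  subgoal by algebra
  subgoal by algebra
  subgoal by algebra
  subgoal by algebra
  done

lemma hpart:
  assumes "on_perp H A B C" "on_perp (2*fst A - fst M, 2*snd A - snd M) D B C"
  shows "on_perp (2*fst H - fst M, 2*snd H - snd M) D B C"
  using assms unfolding on_perp_def dotp_def psub_def by (simp add: algebra_simps)

lemma perp_swap: "on_perp Q A B C \<longleftrightarrow> on_perp Q A C B"
  unfolding on_perp_def dotp_def psub_def by (simp add: algebra_simps) argo

lemma perms: "{i, j, k} = {1, 2, 3::nat} \<Longrightarrow>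
  (i,j,k) \<in> {(1,2,3),(1,3,2),(2,3,1),(2,1,3),(3,1,2),(3,2,1)}"
proof -
  assume h: "{i, j, k} = {1, 2, 3::nat}"
  have "i = 1 \<or> i = 2 \<or> i = 3" "j = 1 \<or> j = 2 \<or> j = 3" "k = 1 \<or> k = 2 \<or> k = 3"
    using h by blast+
  moreover have "2 \<in> {i,j,k}" "3 \<in> {i,j,k}" "1 \<in> {i,j,k}" using h by blast+
  ultimately show ?thesis by (elim disjE; simp)
qed
theorem theorem8p1:
  fixes a b c u :: real and H :: pt
  assumes "a > b" "b > 0" "c > 0" "c^2 = a^2 - b^2"
    and "is_orthocenter H (ellP a b (cusp_param u 1)) (ellP a b (cusp_param u 2))
           (ellP a b (cusp_param u 3))"
  shows "(\<forall>i j k. {i, j, k} = {1, 2, 3::nat} \<longrightarrow>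
            on_perp (- fst (ellP a b u), - snd (ellP a b u))
              (ellP a b (cusp_param u i))
              (negpedal a b c u (cusp_param u j)) (negpedal a b c u (cusp_param u k))
          \<and> on_perp (2 * fst H - fst (ellP a b u), 2 * snd H - snd (ellP a b u))
              (negpedal a b c u (cusp_param u i))
              (ellP a b (cusp_param u j)) (ellP a b (cusp_param u k)))
       \<and> orthologic (ellP a b (cusp_param u 1)) (ellP a b (cusp_param u 2)) (ellP a b (cusp_param u 3))
           (negpedal a b c u (cusp_param u 1)) (negpedal a b c u (cusp_param u 2)) (negpedal a b c u (cusp_param u 3))
       \<and> orthology_center (- fst (ellP a b u), - snd (ellP a b u))
           (ellP a b (cusp_param u 1)) (ellP a b (cusp_param u 2)) (ellP a b (cusp_param u 3))
           (negpedal a b c u (cusp_param u 1)) (negpedal a b c u (cusp_param u 2)) (negpedal a b c u (cusp_param u 3))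
       \<and> orthology_center (2 * fst H - fst (ellP a b u), 2 * snd H - snd (ellP a b u))
           (negpedal a b c u (cusp_param u 1)) (negpedal a b c u (cusp_param u 2)) (negpedal a b c u (cusp_param u 3))
           (ellP a b (cusp_param u 1)) (ellP a b (cusp_param u 2)) (ellP a b (cusp_param u 3))"
proof -
  define s where "s = - u / 3"
  define C where "C = cos s"
  define S where "S = sin s"
  define r where "r = sqrt 3"
  have r2: "r^2 = 3" unfolding r_def by simp
  have CS: "C^2 + S^2 = 1" unfolding C_def S_def by simp
  have ab: "a \<noteq> 0" "b \<noteq> 0" using assms by auto
  have u: "u = 3 * (-s)" unfolding s_def by simp
  have cu: "cos u = 4*C^3-3*C" unfolding u cos_treble_cos C_def by simp
  have s3: "sin (3*s) = 3*S - 4*S^3"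
  proof -
    have "sin (3*s) = sin (2*s + s)" by simp
    also have "\<dots> = 2*S*C*C + (C^2 - S^2)*S"
      unfolding sin_add sin_double cos_double C_def S_def by simp
    also have "\<dots> = 3*S - 4*S^3" using CS by algebra
    finally show ?thesis .
  qed
  have su: "sin u = -(3*S-4*S^3)" unfolding u using s3 by simp
  have cp: "cusp_param u 1 = s" "cusp_param u 2 = s - 2*pi/3"
     "cusp_param u 3 = (s - 2*pi/3) - 2*pi/3"
    unfolding cusp_param_def s_def by (simp_all add: field_simps)
  have rot: "cos (x - 2*pi/3) = cos x * (-1/2) + sin x * (r/2)"
     "sin (x - 2*pi/3) = sin x * (-1/2) - cos x * (r/2)" for x
    unfolding cos_diff sin_diff cos_120 sin_120 r_def by simp_all
  have c2: "cos (cusp_param u 2) = -C/2 + r*S/2" "sin (cusp_param u 2) = -S/2 - r*C/2"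
    unfolding cp rot C_def S_def by (simp_all add: algebra_simps)
  have c3: "cos (cusp_param u 3) = -C/2 - r*S/2" "sin (cusp_param u 3) = -S/2 + r*C/2"
  proof -
    have rr: "r * (r * x) = 3 * x" for x using r2 by (simp add: power2_eq_square mult.assoc[symmetric])
    have e: "cusp_param u 3 = cusp_param u 2 - 2*pi/3" using cp by simp
    show "cos (cusp_param u 3) = -C/2 - r*S/2" unfolding e rot c2 by (simp add: field_simps rr)
    show "sin (cusp_param u 3) = -S/2 + r*C/2" unfolding e rot c2 by (simp add: field_simps rr)
  qed
  have c1: "cos (cusp_param u 1) = C" "sin (cusp_param u 1) = S"
    unfolding cp C_def S_def by simp_all
  have eM: "ellP a b u = (a*(4*C^3-3*C), b*(-(3*S-4*S^3)))" by (simp add: ellP_def cu su)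
  have eP: "ellP a b (cusp_param u 1) = (a*C, b*S)"
    "ellP a b (cusp_param u 2) = (a*(-C/2 + r*S/2), b*(-S/2 - r*C/2))"
    "ellP a b (cusp_param u 3) = (a*(-C/2 - r*S/2), b*(-S/2 + r*C/2))"
    unfolding ellP_def c1 c2 c3 by simp_all
  have eD: "negpedal a b c u (cusp_param u 1) = NP a b c C S (4*C^3-3*C) (-(3*S-4*S^3))"
    "negpedal a b c u (cusp_param u 2) = NP a b c (-C/2 + r*S/2) (-S/2 - r*C/2) (4*C^3-3*C) (-(3*S-4*S^3))"
    "negpedal a b c u (cusp_param u 3) = NP a b c (-C/2 - r*S/2) (-S/2 + r*C/2) (4*C^3-3*C) (-(3*S-4*S^3))"
    unfolding negpedal_NP c1 c2 c3 cu su by simp_all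
  note A = alg[OF CS r2 assms(4) ab eM eP eD]
  have A': "on_perp (-fst (ellP a b u), -snd (ellP a b u)) (ellP a b (cusp_param u 1))
             (negpedal a b c u (cusp_param u 2)) (negpedal a b c u (cusp_param u 3))"
    "on_perp (-fst (ellP a b u), -snd (ellP a b u)) (ellP a b (cusp_param u 2))
             (negpedal a b c u (cusp_param u 3)) (negpedal a b c u (cusp_param u 1))"
    "on_perp (-fst (ellP a b u), -snd (ellP a b u)) (ellP a b (cusp_param u 3))
             (negpedal a b c u (cusp_param u 1)) (negpedal a b c u (cusp_param u 2))"
    "on_perp (2*fst (ellP a b (cusp_param u 1)) - fst (ellP a b u), 2*snd (ellP a b (cusp_param u 1)) - snd (ellP a b u))
        (negpedal a b c u (cusp_param u 1)) (ellP a b (cusp_param u 2)) (ellP a b (cusp_param u 3))"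
    "on_perp (2*fst (ellP a b (cusp_param u 2)) - fst (ellP a b u), 2*snd (ellP a b (cusp_param u 2)) - snd (ellP a b u))
        (negpedal a b c u (cusp_param u 2)) (ellP a b (cusp_param u 3)) (ellP a b (cusp_param u 1))"
    "on_perp (2*fst (ellP a b (cusp_param u 3)) - fst (ellP a b u), 2*snd (ellP a b (cusp_param u 3)) - snd (ellP a b u))
        (negpedal a b c u (cusp_param u 3)) (ellP a b (cusp_param u 1)) (ellP a b (cusp_param u 2))"
    using A by simp_all
  have Hs: "on_perp H (ellP a b (cusp_param u 1)) (ellP a b (cusp_param u 2)) (ellP a b (cusp_param u 3))"
    "on_perp H (ellP a b (cusp_param u 2)) (ellP a b (cusp_param u 3)) (ellP a b (cusp_param u 1))"
    "on_perp H (ellP a b (cusp_param u 3)) (ellP a b (cusp_param u 1)) (ellP a b (cusp_param u 2))"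
    using assms(5) unfolding is_orthocenter_def by auto
  have B: "on_perp (2 * fst H - fst (ellP a b u), 2 * snd H - snd (ellP a b u))
              (negpedal a b c u (cusp_param u 1))
              (ellP a b (cusp_param u 2)) (ellP a b (cusp_param u 3))"
    "on_perp (2 * fst H - fst (ellP a b u), 2 * snd H - snd (ellP a b u))
              (negpedal a b c u (cusp_param u 2))
              (ellP a b (cusp_param u 3)) (ellP a b (cusp_param u 1))"
    "on_perp (2 * fst H - fst (ellP a b u), 2 * snd H - snd (ellP a b u))
              (negpedal a b c u (cusp_param u 3))
              (ellP a b (cusp_param u 1)) (ellP a b (cusp_param u 2))"
    using hpart[OF Hs(1) A'(4)] hpart[OF Hs(2) A'(5)] hpart[OF Hs(3) A'(6)] by auto
  have P1: "\<forall>i j k. {i, j, k} = {1, 2, 3::nat} \<longrightarrow>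
            on_perp (- fst (ellP a b u), - snd (ellP a b u))
              (ellP a b (cusp_param u i))
              (negpedal a b c u (cusp_param u j)) (negpedal a b c u (cusp_param u k))
          \<and> on_perp (2 * fst H - fst (ellP a b u), 2 * snd H - snd (ellP a b u))
              (negpedal a b c u (cusp_param u i))
              (ellP a b (cusp_param u j)) (ellP a b (cusp_param u k))"
  proof (intro allI impI)
    fix i j k :: nat assume "{i, j, k} = {1, 2, 3::nat}"
    from perms[OF this] show "on_perp (- fst (ellP a b u), - snd (ellP a b u))
              (ellP a b (cusp_param u i))
              (negpedal a b c u (cusp_param u j)) (negpedal a b c u (cusp_param u k))
          \<and> on_perp (2 * fst H - fst (ellP a b u), 2 * snd H - snd (ellP a b u))
              (negpedal a b c u (cusp_param u i))
              (ellP a b (cusp_param u j)) (ellP a b (cusp_param u k))"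
      using A'(1-3) B perp_swap[THEN iffD1, OF A'(1)] perp_swap[THEN iffD1, OF A'(2)]
        perp_swap[THEN iffD1, OF A'(3)] perp_swap[THEN iffD1, OF B(1)]
        perp_swap[THEN iffD1, OF B(2)] perp_swap[THEN iffD1, OF B(3)] by auto
  qed
  have OC: "orthology_center (- fst (ellP a b u), - snd (ellP a b u))
           (ellP a b (cusp_param u 1)) (ellP a b (cusp_param u 2)) (ellP a b (cusp_param u 3))
           (negpedal a b c u (cusp_param u 1)) (negpedal a b c u (cusp_param u 2)) (negpedal a b c u (cusp_param u 3))"
    unfolding orthology_center_def using A'(1-3) by blast
  show ?thesis
    using P1 OC B unfolding orthologic_def orthology_center_def by blast
qed

end
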